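(* Let $L$ be a distributive lattice, $n\ge1$, $a_i,b_i\in L$ with $a_i<b_i$ for $i\in[n]$, $\widehat{\mathbf e}_I\in L^n$ ($I\subseteq[n]$) the tuple with $i$-th component $b_i$ if $i\in I$ and $a_i$ otherwise, $D=\{\widehat{\mathbf e}_I:I\subseteq[n]\}$, and $f\colon D\to L$ satisfying $$f(\widehat{\mathbf e}_{I\cup\{k\}})\wedge a_k\le f(\widehat{\mathbf e}_I)\le f(\widehat{\mathbf e}_{I\setminus\{k\}})\vee b_k\quad\text{for all } I\subseteq[n],\ k\in[n].$$ Then for all $S\subseteq T\subseteq[n]$, $$f(\widehat{\mathbf e}_T)\wedge\bigwedge_{k\in T\setminus S}a_k\le f(\widehat{\mathbf e}_S)\quad\text{and}\quad f(\widehat{\mathbf e}_T)\le f(\widehat{\mathbf e}_S)\vee\bigvee_{k\in T\setminus S}b_k.$$ *)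

theory Defs
  imports Main
begin

text \<open>The tuple e-hat_I in L^n, represented as a function on nat; components
outside [n] = {1..n} are fixed to a i (irrelevant).\<close>
definition ehat :: "(nat \<Rightarrow> 'a) \<Rightarrow> (nat \<Rightarrow> 'a) \<Rightarrow> nat set \<Rightarrow> (nat \<Rightarrow> 'a)" where
  "ehat a b I = (\<lambda>i. if i \<in> I then b i else a i)"

end

theory Submission
  imports Defs
begin

lemma aux:
  fixes a b :: "nat \<Rightarrow> 'a :: distrib_lattice"
    and f :: "(nat \<Rightarrow> 'a) \<Rightarrow> 'a"
  assumes A3: "\<And>I k. I \<subseteq> {1..n} \<Longrightarrow> k \<in> {1..n} \<Longrightarrow>
           inf (f (ehat a b (I \<union> {k}))) (a k) \<le> f (ehat a b I)"
    and A4: "\<And>I k. I \<subseteq> {1..n} \<Longrightarrow> k \<in> {1..n} \<Longrightarrow>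
           f (ehat a b I) \<le> sup (f (ehat a b (I - {k}))) (b k)"
    and T: "T \<subseteq> {1..n}"
  shows "finite R \<Longrightarrow> R \<noteq> {} \<Longrightarrow> R \<subseteq> T \<Longrightarrow>
     inf (f (ehat a b T)) (Inf_fin (a ` R)) \<le> f (ehat a b (T - R)) \<and>
     f (ehat a b T) \<le> sup (f (ehat a b (T - R))) (Sup_fin (b ` R))"
proof (induction R rule: finite_ne_induct)
  case (singleton x)
  have x: "x \<in> {1..n}" using singleton T by auto
  have e: "(T - {x}) \<union> {x} = T" using singleton by auto
  have 1: "inf (f (ehat a b T)) (a x) \<le> f (ehat a b (T - {x}))"
    using A3[OF _ x, of "T - {x}"] T e by auto
  have 2: "f (ehat a b T) \<le> sup (f (ehat a b (T - {x}))) (b x)"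
    using A4[OF T x] .
  show ?case using 1 2 by simp
next
  case (insert x R)
  have x: "x \<in> {1..n}" using insert T by auto
  have IH: "inf (f (ehat a b T)) (Inf_fin (a ` R)) \<le> f (ehat a b (T - R))"
     "f (ehat a b T) \<le> sup (f (ehat a b (T - R))) (Sup_fin (b ` R))"
    using insert by auto
  have e: "(T - insert x R) \<union> {x} = T - R" using insert by auto
  have e2: "(T - R) - {x} = T - insert x R" by auto
  have 1: "inf (f (ehat a b (T - R))) (a x) \<le> f (ehat a b (T - insert x R))"
    using A3[OF _ x, of "T - insert x R"] T e by auto
  have 2: "f (ehat a b (T - R)) \<le> sup (f (ehat a b (T - insert x R))) (b x)"
    using A4[OF _ x, of "T - R"] T e2 by auto
  have i: "Inf_fin (a ` insert x R) = inf (a x) (Inf_fin (a ` R))"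
    using insert by (simp add: Inf_fin.insert)
  have s: "Sup_fin (b ` insert x R) = sup (b x) (Sup_fin (b ` R))"
    using insert by (simp add: Sup_fin.insert)
  have "inf (f (ehat a b T)) (inf (a x) (Inf_fin (a ` R)))
        \<le> inf (f (ehat a b (T - R))) (a x)"
    using IH(1) by (meson inf.bounded_iff inf_le1 inf_le2 order_trans)
  with 1 have L: "inf (f (ehat a b T)) (inf (a x) (Inf_fin (a ` R))) \<le> f (ehat a b (T - insert x R))"
    by (meson order_trans)
  have "sup (f (ehat a b (T - R))) (Sup_fin (b ` R)) \<le>
        sup (f (ehat a b (T - insert x R))) (sup (b x) (Sup_fin (b ` R)))"
    using 2 by (meson sup.bounded_iff sup_ge1 sup_ge2 order_trans)
  with IH(2) have U: "f (ehat a b T) \<le> sup (f (ehat a b (T - insert x R))) (sup (b x) (Sup_fin (b ` R)))"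
    by (meson order_trans)
  show ?case using L U i s by simp
qed

theorem lemma3p1:
  fixes a b :: "nat \<Rightarrow> 'a :: distrib_lattice"
    and f :: "(nat \<Rightarrow> 'a) \<Rightarrow> 'a"
    and n :: nat
  assumes "n \<ge> 1"
    and "\<And>i. i \<in> {1..n} \<Longrightarrow> a i < b i"
    and "\<And>I k. I \<subseteq> {1..n} \<Longrightarrow> k \<in> {1..n} \<Longrightarrow>
           inf (f (ehat a b (I \<union> {k}))) (a k) \<le> f (ehat a b I)"
    and "\<And>I k. I \<subseteq> {1..n} \<Longrightarrow> k \<in> {1..n} \<Longrightarrow>
           f (ehat a b I) \<le> sup (f (ehat a b (I - {k}))) (b k)"
    and "S \<subseteq> T" and "T \<subseteq> {1..n}"
  shows "(S = T \<longrightarrow> f (ehat a b T) \<le> f (ehat a b S)) \<and>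
         (S \<noteq> T \<longrightarrow>
            inf (f (ehat a b T)) (Inf_fin (a ` (T - S))) \<le> f (ehat a b S) \<and>
            f (ehat a b T) \<le> sup (f (ehat a b S)) (Sup_fin (b ` (T - S))))"
proof -
  have D: "T - (T - S) = S" using assms(5) by auto
  show ?thesis
  proof (cases "S = T")
    case True then show ?thesis by simp
  next
    case False
    have "finite T" using assms(6) finite_subset by blast
    then have "finite (T - S)" by simp
    moreover have "T - S \<noteq> {}" using False assms(5) by auto
    ultimately show ?thesis
      using aux[OF assms(3) assms(4) assms(6), of "T - S"] D False by auto
  qed
qed

end
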